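(* Let $G$ be a graph with $\chi'(G)=\Delta(G)=4$, let $h$ be a proper $4$-edge coloring of $G$ and $f$ a proper $5$-edge coloring of $G$. Let $P$ be a connected component of $G_f(1,2)$ (a maximal path or cycle whose edges are colored $1$ or $2$ under $f$) containing an edge $xy$ with $f(xy)=2$ and $h(xy)=1$. If there is no edge $e$ on $P$ with $f(e)=h(e)=1$ at distance at most $2$ from $xy$ on $P$, then there is a proper $5$-edge coloring $f'$ of $G$, obtainable from $f$ by a sequence of interchanges, with $|M(f',1)\cap M(h,1)|>|M(f,1)\cap M(h,1)|$.
   Context: Graphs are finite and simple; $\Delta(G)$ is the maximum degree. A proper $t$-edge coloring is a map $E(G)\to\{1,\dots,t\}$ with adjacent edges receiving distinct colors; $\chi'(G)$ is the least $t$ admitting one. $M(\varphi,k)$ is the set of edges colored $k$ under $\varphi$. $G_f(a,b)$ is the subgraph induced by the edges colored $a$ or $b$ under $f$. An interchange swaps colors $a$ and $b$ on one connected component of $G_f(a,b)$. The distance between two edges $e,e'$ on a path or cycle $P$ is the number of edges between $e$ and $e'$ on $P$. *)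

theory Defs
  imports Main
begin

definition simple_graph :: "'a set \<Rightarrow> 'a set set \<Rightarrow> bool" where
  "simple_graph V E \<longleftrightarrow> finite V \<and>
     (\<forall>e\<in>E. \<exists>u v. u \<noteq> v \<and> u \<in> V \<and> v \<in> V \<and> e = {u, v})"

definition degree :: "'a set set \<Rightarrow> 'a \<Rightarrow> nat" where
  "degree E v = card {e\<in>E. v \<in> e}"

definition max_degree :: "'a set \<Rightarrow> 'a set set \<Rightarrow> nat" where
  "max_degree V E = Max (insert 0 (degree E ` V))"

definition edges_adj :: "'a set \<Rightarrow> 'a set \<Rightarrow> bool" where
  "edges_adj e e' \<longleftrightarrow> e \<noteq> e' \<and> e \<inter> e' \<noteq> {}"

definition proper_edge_coloring :: "'a set set \<Rightarrow> nat \<Rightarrow> ('a set \<Rightarrow> nat) \<Rightarrow> bool" where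
  "proper_edge_coloring E t f \<longleftrightarrow>
     (\<forall>e\<in>E. f e \<in> {1..t}) \<and>
     (\<forall>e\<in>E. \<forall>e'\<in>E. edges_adj e e' \<longrightarrow> f e \<noteq> f e')"

definition chromatic_index :: "'a set set \<Rightarrow> nat" where
  "chromatic_index E = (LEAST t. \<exists>f. proper_edge_coloring E t f)"

definition color_class :: "'a set set \<Rightarrow> ('a set \<Rightarrow> nat) \<Rightarrow> nat \<Rightarrow> 'a set set" where
  "color_class E f k = {e\<in>E. f e = k}"

definition two_color_edges :: "'a set set \<Rightarrow> ('a set \<Rightarrow> nat) \<Rightarrow> nat \<Rightarrow> nat \<Rightarrow> 'a set set" where
  "two_color_edges E f a b = {e\<in>E. f e = a \<or> f e = b}"

definition component :: "'a set set \<Rightarrow> ('a set \<Rightarrow> nat) \<Rightarrow> nat \<Rightarrow> nat \<Rightarrow> 'a set \<Rightarrow> 'a set set" where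
  "component E f a b e0 =
     {e. (\<lambda>x y. x \<in> two_color_edges E f a b \<and> y \<in> two_color_edges E f a b \<and> edges_adj x y)\<^sup>*\<^sup>* e0 e
         \<and> e \<in> two_color_edges E f a b}"

definition swap_on :: "'a set set \<Rightarrow> nat \<Rightarrow> nat \<Rightarrow> ('a set \<Rightarrow> nat) \<Rightarrow> 'a set \<Rightarrow> nat" where
  "swap_on C a b f = (\<lambda>e. if e \<in> C then (if f e = a then b else a) else f e)"

definition interchange :: "'a set set \<Rightarrow> nat \<Rightarrow> ('a set \<Rightarrow> nat) \<Rightarrow> ('a set \<Rightarrow> nat) \<Rightarrow> bool" where
  "interchange E t f f' \<longleftrightarrow>
     (\<exists>a b e0. a \<in> {1..t} \<and> b \<in> {1..t} \<and> a \<noteq> b \<and> e0 \<in> two_color_edges E f a b \<and>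
        f' = swap_on (component E f a b e0) a b f)"

(* line-graph distance within the edge set P: there is a walk e = e_0, ..., e_n = e' of
   pairwise-adjacent consecutive edges of P with n steps; the distance in the sense of the paper
   ("number of edges between") is then n - 1. *)
definition walk_steps_in :: "'a set set \<Rightarrow> nat \<Rightarrow> 'a set \<Rightarrow> 'a set \<Rightarrow> bool" where
  "walk_steps_in P n e e' \<longleftrightarrow>
     ((\<lambda>x y. x \<in> P \<and> y \<in> P \<and> edges_adj x y) ^^ n) e e'"

definition dist_le_on :: "'a set set \<Rightarrow> 'a set \<Rightarrow> 'a set \<Rightarrow> nat \<Rightarrow> bool" where
  "dist_le_on P e e' d \<longleftrightarrow> e \<in> P \<and> e' \<in> P \<and> (\<exists>n\<le>d+1. walk_steps_in P n e e')"

end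

theory Submission
  imports Defs
begin



lemma uniq:
  assumes "proper_edge_coloring E t g" "e \<in> E" "e' \<in> E" "z \<in> e" "z \<in> e'" "g e = g e'"
  shows "e = e'"
  using assms unfolding proper_edge_coloring_def edges_adj_def by blast

lemma comp_sub_T: "component E g a b e0 \<subseteq> two_color_edges E g a b"
  unfolding component_def by blast

lemma comp_self: "e0 \<in> two_color_edges E g a b \<Longrightarrow> e0 \<in> component E g a b e0"
  unfolding component_def by blast

lemma comp_closed:
  assumes "e \<in> component E g a b e0" "e' \<in> two_color_edges E g a b" "edges_adj e e'"
  shows "e' \<in> component E g a b e0"
  using assms unfolding component_def
  by (auto intro: rtranclp.rtrancl_into_rtrancl)

lemma comp_subset:
  assumes "e0 \<in> S" "\<And>e e'. e \<in> S \<Longrightarrow> e' \<in> two_color_edges E g a b \<Longrightarrow> edges_adj e e' \<Longrightarrow> e' \<in> S"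
  shows "component E g a b e0 \<subseteq> S"
proof
  fix e assume "e \<in> component E g a b e0"
  then have "(\<lambda>x y. x \<in> two_color_edges E g a b \<and> y \<in> two_color_edges E g a b \<and> edges_adj x y)\<^sup>*\<^sup>* e0 e"
    unfolding component_def by blast
  then show "e \<in> S"
    by (induction rule: rtranclp_induct) (use assms in auto)
qed

lemma swap_proper:
  assumes P: "proper_edge_coloring E t g" and ab: "a \<in> {1..t}" "b \<in> {1..t}" "a \<noteq> b"
  shows "proper_edge_coloring E t (swap_on (component E g a b e0) a b g)"
proof -
  let ?K = "component E g a b e0"
  have KT: "\<And>e. e \<in> ?K \<Longrightarrow> e \<in> E \<and> (g e = a \<or> g e = b)"
    using comp_sub_T unfolding two_color_edges_def by blast
  show ?thesis
    unfolding proper_edge_coloring_def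
  proof (intro conjI ballI impI)
    fix e assume "e \<in> E" then show "swap_on ?K a b g e \<in> {1..t}"
      using P ab unfolding proper_edge_coloring_def swap_on_def by auto
  next
    fix e e' assume e: "e \<in> E" and e': "e' \<in> E" and adj: "edges_adj e e'"
    have ne: "g e \<noteq> g e'" using P e e' adj unfolding proper_edge_coloring_def by blast
    have adj': "edges_adj e' e" using adj unfolding edges_adj_def by blast
    show "swap_on ?K a b g e \<noteq> swap_on ?K a b g e'"
    proof (cases "e \<in> ?K")
      case True
      note eK = True
      show ?thesis
      proof (cases "e' \<in> ?K")
        case True
        then show ?thesis using eK KT[of e] KT[of e'] ne unfolding swap_on_def by auto
      next
        case False
        have "g e' \<noteq> a \<and> g e' \<noteq> b"
          using comp_closed[OF eK _ adj] e' False unfolding two_color_edges_def by blast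
        then show ?thesis using eK False unfolding swap_on_def by auto
      qed
    next
      case False
      note eK = False
      show ?thesis
      proof (cases "e' \<in> ?K")
        case True
        have "g e \<noteq> a \<and> g e \<noteq> b"
          using comp_closed[OF True _ adj'] e eK unfolding two_color_edges_def by blast
        then show ?thesis using eK True unfolding swap_on_def by auto
      next
        case False
        then show ?thesis using eK ne unfolding swap_on_def by auto
      qed
    qed
  qed
qed

lemma interchange_proper:
  "interchange E t g g' \<Longrightarrow> proper_edge_coloring E t g \<Longrightarrow> proper_edge_coloring E t g'"
  unfolding interchange_def using swap_proper by blast

lemma reach_proper:
  "(interchange E t)\<^sup>*\<^sup>* g g' \<Longrightarrow> proper_edge_coloring E t g \<Longrightarrow> proper_edge_coloring E t g'"
  by (induction rule: rtranclp_induct) (auto intro: interchange_proper)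




definition miss :: "'a set set \<Rightarrow> ('a set \<Rightarrow> nat) \<Rightarrow> 'a \<Rightarrow> nat \<Rightarrow> bool" where
  "miss E g z c \<longleftrightarrow> \<not> (\<exists>e\<in>E. z \<in> e \<and> g e = c)"

definition shrink :: "'a set set \<Rightarrow> ('a set \<Rightarrow> nat) \<Rightarrow> ('a set \<Rightarrow> nat) \<Rightarrow> bool" where
  "shrink E g g' \<longleftrightarrow> (\<forall>e\<in>E. g' e \<in> {1,2} \<longrightarrow> g' e = g e)"

definition Good :: "'a set set \<Rightarrow> ('a set \<Rightarrow> nat) \<Rightarrow> ('a set \<Rightarrow> nat) \<Rightarrow> 'a set set \<Rightarrow> bool" where
  "Good E g g' R \<longleftrightarrow> (interchange E 5)\<^sup>*\<^sup>* g g' \<and> shrink E g g' \<and>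
     (\<forall>e\<in>E. g e \<in> {1,2} \<longrightarrow> g' e \<noteq> g e \<longrightarrow> e \<in> R)"

lemma Good_refl: "Good E g g R"
  unfolding Good_def shrink_def by auto

lemma Good_trans:
  "Good E g g1 R1 \<Longrightarrow> Good E g1 g2 R2 \<Longrightarrow> Good E g g2 (R1 \<union> R2)"
  unfolding Good_def shrink_def
  by (metis (no_types, lifting) UnI1 UnI2 rtranclp_trans)

lemma Good_mono: "Good E g g' R \<Longrightarrow> R \<subseteq> R' \<Longrightarrow> Good E g g' R'"
  unfolding Good_def by blast

lemma recolor:
  assumes P: "proper_edge_coloring E 5 g" and r: "r \<in> E" "r = {p,q}" and k: "g r = k" "k \<in> {1,2}"
    and c: "c \<in> {3,4,5}" and mp: "miss E g p c" and mq: "miss E g q c"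
  shows "Good E g (g(r := c)) {r}"
proof -
  have rT: "r \<in> two_color_edges E g k c" using r k unfolding two_color_edges_def by auto
  have K: "component E g k c r = {r}"
  proof
    show "component E g k c r \<subseteq> {r}"
    proof (rule comp_subset)
      show "r \<in> {r}" by simp
    next
      fix e e' assume e: "e \<in> {r}" and e': "e' \<in> two_color_edges E g k c" and adj: "edges_adj e e'"
      then obtain z where z: "z \<in> r" "z \<in> e'" "e' \<noteq> r" unfolding edges_adj_def by blast
      have e'E: "e' \<in> E" "g e' = k \<or> g e' = c" using e' unfolding two_color_edges_def by auto
      have "z = p \<or> z = q" using z r by auto
      then have "g e' \<noteq> c" using mp mq z e'E unfolding miss_def by blast
      then have "g e' = k" using e'E by blast
      then have "e' = r" using uniq[OF P e'E(1) r(1) z(2) z(1)] k by simp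
      then show "e' \<in> {r}" using z by simp
    qed
  next
    show "{r} \<subseteq> component E g k c r" using comp_self[OF rT] by simp
  qed
  have eq: "g(r := c) = swap_on (component E g k c r) k c g"
    unfolding K swap_on_def using k by (auto simp: fun_eq_iff)
  have "interchange E 5 g (g(r := c))"
    unfolding interchange_def using rT eq k c by (intro exI[of _ k] exI[of _ c] exI[of _ r]) auto
  then show ?thesis unfolding Good_def shrink_def using c by auto
qed

lemma free_swap:
  assumes c: "c \<in> {3,4,5}" "d \<in> {3,4,5}" "c \<noteq> d" and e0: "e0 \<in> E" "g e0 = c"
  shows "Good E g (swap_on (component E g c d e0) c d g) {}"
proof -
  let ?K = "component E g c d e0"
  have T: "e0 \<in> two_color_edges E g c d" using e0 unfolding two_color_edges_def by auto
  have "interchange E 5 g (swap_on ?K c d g)"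
    unfolding interchange_def using T c by (intro exI[of _ c] exI[of _ d] exI[of _ e0]) auto
  moreover have "\<And>e. e \<in> ?K \<Longrightarrow> g e = c \<or> g e = d"
    using comp_sub_T unfolding two_color_edges_def by blast
  moreover have cd12: "c \<notin> {1,2}" "d \<notin> {1,2}" using c by auto
  ultimately have "\<And>e. e \<in> ?K \<Longrightarrow> g e \<notin> {1,2} \<and> swap_on ?K c d g e \<notin> {1,2}"
    unfolding swap_on_def by (metis (full_types))
  moreover have "\<And>e. e \<notin> ?K \<Longrightarrow> swap_on ?K c d g e = g e" unfolding swap_on_def by simp
  ultimately show ?thesis unfolding Good_def shrink_def using `interchange E 5 g _`
    by (metis empty_iff r_into_rtranclp)
qed

lemma swap_miss_new:
  assumes P: "proper_edge_coloring E t g" and s: "s \<in> E" "z \<in> s" "g s = c" and m: "miss E g z d"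
  shows "miss E (swap_on (component E g c d s) c d g) z c"
proof -
  let ?K = "component E g c d s"
  have sK: "s \<in> ?K" using comp_self s unfolding two_color_edges_def by blast
  { fix e assume e: "e \<in> E" "z \<in> e" and ge: "swap_on ?K c d g e = c"
    have False
    proof (cases "e \<in> ?K")
      case True
      then have "g e = c \<or> g e = d" using comp_sub_T unfolding two_color_edges_def by blast
      then show False using ge True m e unfolding swap_on_def miss_def by (auto split: if_splits)
    next
      case False
      then have "g e = c" using ge unfolding swap_on_def by simp
      then have "e = s" using uniq[OF P e(1) s(1) e(2) s(2)] s by simp
      then show False using False sK by simp
    qed }
  then show ?thesis unfolding miss_def by blast
qed

lemma swap_unchanged:
  assumes "\<forall>e\<in>K. z \<notin> e"
  shows "miss E (swap_on K c d g) z k \<longleftrightarrow> miss E g z k"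
  using assms unfolding miss_def swap_on_def by auto

lemma not_miss: "\<not> miss E g z c \<Longrightarrow> \<exists>e\<in>E. z \<in> e \<and> g e = c"
  unfolding miss_def by blast

lemma miss_exists:
  assumes P: "proper_edge_coloring E 5 g" and fin: "finite E"
    and deg: "card {e\<in>E. z \<in> e} \<le> 4"
    and e1: "e1 \<in> E" "z \<in> e1" "g e1 = 1" and e2: "e2 \<in> E" "z \<in> e2" "g e2 = 2"
  shows "\<exists>c\<in>{3,4,5}. miss E g z c"
proof (rule ccontr)
  assume "\<not> ?thesis"
  then have "\<forall>c\<in>{3,4,5::nat}. \<exists>e\<in>E. z \<in> e \<and> g e = c" unfolding miss_def by blast
  then obtain s3 s4 s5 where s: "s3 \<in> E" "z \<in> s3" "g s3 = 3" "s4 \<in> E" "z \<in> s4" "g s4 = 4"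
      "s5 \<in> E" "z \<in> s5" "g s5 = 5" by (metis insertCI)
  have sub: "{e1,e2,s3,s4,s5} \<subseteq> {e\<in>E. z \<in> e}" using s e1 e2 by auto
  have "card {e1,e2,s3,s4,s5} = 5"
  proof -
    have "g ` {e1,e2,s3,s4,s5} = {1,2,3,4,5}" using s e1 e2 by auto
    moreover have "card (g ` {e1,e2,s3,s4,s5}) \<le> card {e1,e2,s3,s4,s5}" by (rule card_image_le) simp
    moreover have "card {e1,e2,s3,s4,s5} \<le> 5" using card_length[of "[e1,e2,s3,s4,s5]"] by simp
    ultimately show ?thesis by simp
  qed
  moreover have "card {e1,e2,s3,s4,s5} \<le> card {e\<in>E. z \<in> e}"
    using sub fin by (intro card_mono) auto
  ultimately show False using deg by simp
qed




lemma SG_finite: "simple_graph V E \<Longrightarrow> finite E"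
proof -
  assume SG: "simple_graph V E"
  then have "E \<subseteq> Pow V" unfolding simple_graph_def by fastforce
  moreover have "finite V" using SG unfolding simple_graph_def by simp
  ultimately show "finite E" by (meson finite_Pow_iff finite_subset)
qed
lemma SG_card2: "simple_graph V E \<Longrightarrow> e \<in> E \<Longrightarrow> card e = 2"
  unfolding simple_graph_def by fastforce

lemma add_edges:
  assumes "finite N" "finite A" "\<forall>e\<in>N. card e = 2 \<and> e \<inter> A \<noteq> {}"
  shows "card (A \<union> \<Union>N) \<le> card A + card N"
  using assms
proof (induction N rule: finite_induct)
  case empty then show ?case by simp
next
  case (insert e N)
  let ?B = "A \<union> \<Union>N"
  have IH: "card ?B \<le> card A + card N" using insert.IH[OF insert.prems(1)] insert.prems(2) by blast
  have allfin: "\<forall>x\<in>insert e N. finite x"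
  proof
    fix x assume "x \<in> insert e N"
    then have "card x = 2" using insert.prems(2) by blast
    then show "finite x" by (intro card_ge_0_finite) simp
  qed
  have finN: "finite (\<Union>N)" using insert(1) allfin by blast
  have finB: "finite ?B" using finN insert.prems(1) by simp
  obtain u where u: "u \<in> e" "u \<in> A" using insert.prems(2) by blast
  have "card e = 2" using insert.prems(2) by simp
  then obtain x y where xy: "e = {x,y}" "x \<noteq> y" by (meson card_2_iff)
  have "?B \<union> e = insert (if u = x then y else x) ?B" using xy u by auto
  then have "card (?B \<union> e) \<le> card ?B + 1" using finB by (simp add: card_insert_le_m1 card_insert_if)
  moreover have "A \<union> \<Union>(insert e N) = ?B \<union> e" by auto
  moreover have "card (insert e N) = card N + 1" using insert.hyps by simp
  ultimately show ?case using IH by simp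
qed

lemma relpow_T:
  assumes "(R ^^ i) e0 e" "\<And>x y. R x y \<Longrightarrow> y \<in> T" "e0 \<in> T"
  shows "e \<in> T"
  using assms
proof (cases i)
  case 0 then show ?thesis using assms by simp
next
  case (Suc j)
  then show ?thesis using assms(1,2) by (metis relpowp_Suc_E)
qed


lemma vert_bound:
  assumes fin: "finite E" and two: "\<forall>e\<in>E. card e = 2" and e0T: "e0 \<in> two_color_edges E g a b"
  shows "card (\<Union> (component E g a b e0)) \<le> card (component E g a b e0) + 1"
proof -
  let ?T = "two_color_edges E g a b"
  let ?R = "\<lambda>x y. x \<in> ?T \<and> y \<in> ?T \<and> edges_adj x y"
  let ?K = "component E g a b e0"
  define S where "S n = {e. \<exists>i\<le>n. (?R ^^ i) e0 e}" for n
  have TE: "?T \<subseteq> E" unfolding two_color_edges_def by blast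
  have SK: "S n \<subseteq> ?K" for n
  proof
    fix e assume "e \<in> S n"
    then obtain i where "(?R ^^ i) e0 e" unfolding S_def by blast
    moreover from this have "e \<in> ?T" by (rule relpow_T) (use e0T in blast)+
    ultimately show "e \<in> ?K" unfolding component_def using relpowp_imp_rtranclp by (metis (mono_tags, lifting) mem_Collect_eq)
  qed
  have finK: "finite ?K" using comp_sub_T TE fin by (meson finite_subset)
  have finS: "finite (S n)" for n using SK finK finite_subset by blast
  have fin2: "\<And>e. e \<in> ?K \<Longrightarrow> finite e \<and> card e = 2"
    using comp_sub_T TE two by (metis card.infinite subset_iff zero_neq_numeral)
  have bound: "card (\<Union>(S n)) \<le> card (S n) + 1" for n
  proof (induction n)
    case 0
    have "S 0 = {e0}" unfolding S_def by simp
    moreover have "card e0 = 2" using e0T TE two by auto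
    ultimately show ?case by simp
  next
    case (Suc n)
    define N where "N = {e. (?R ^^ Suc n) e0 e} - S n"
    have SS: "S (Suc n) = S n \<union> N"
    proof
      show "S (Suc n) \<subseteq> S n \<union> N"
      proof
        fix e assume "e \<in> S (Suc n)"
        then obtain i where i: "i \<le> Suc n" "(?R ^^ i) e0 e" unfolding S_def by blast
        show "e \<in> S n \<union> N"
        proof (cases "i = Suc n")
          case True then show ?thesis using i unfolding N_def by blast
        next
          case False then have "i \<le> n" using i by simp
          then show ?thesis using i unfolding S_def by blast
        qed
      qed
    next
      show "S n \<union> N \<subseteq> S (Suc n)" unfolding S_def N_def
        using le_Suc_eq by blast
    qed
    have NK: "N \<subseteq> ?K" using SK[of "Suc n"] SS by blast
    have finN: "finite N" using NK finK finite_subset by blast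
    have finU: "finite (\<Union>(S n))" using finS SK fin2 by (metis finite_Union subsetD)
    have Nprop: "\<forall>e\<in>N. card e = 2 \<and> e \<inter> \<Union>(S n) \<noteq> {}"
    proof
      fix e assume eN: "e \<in> N"
      then obtain d where d: "(?R ^^ n) e0 d" "?R d e" unfolding N_def by (auto elim: relpowp_Suc_E)
      then have "d \<in> S n" unfolding S_def by blast
      moreover have "e \<inter> d \<noteq> {}" using d(2) unfolding edges_adj_def by blast
      ultimately show "card e = 2 \<and> e \<inter> \<Union>(S n) \<noteq> {}" using fin2 NK eN by blast
    qed
    have "card (\<Union>(S n) \<union> \<Union>N) \<le> card (\<Union>(S n)) + card N"
      by (rule add_edges[OF finN finU Nprop])
    moreover have UU: "\<Union>(S (Suc n)) = \<Union>(S n) \<union> \<Union>N" using SS by blast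
    moreover have "card (S (Suc n)) = card (S n) + card N"
      proof -
      have disj: "S n \<inter> N = {}" unfolding N_def by blast
      show ?thesis using SS card_Un_disjoint[OF finS finN disj] by simp
    qed
    ultimately show ?case using Suc.IH unfolding UU by linarith
  qed
  have mono: "S m \<subseteq> S n" if mn: "m \<le> n" for m n
  proof
    fix e assume "e \<in> S m"
    then obtain i where i: "i \<le> m" "(?R ^^ i) e0 e" unfolding S_def by blast
    then have "i \<le> n" using mn by simp
    then show "e \<in> S n" using i(2) unfolding S_def by blast
  qed
  have "\<And>F. finite F \<Longrightarrow> F \<subseteq> ?K \<Longrightarrow> \<exists>m. F \<subseteq> S m"
  proof -
    fix F :: "'a set set" assume "finite F" "F \<subseteq> ?K"
    then show "\<exists>m. F \<subseteq> S m"
    proof (induction F rule: finite_induct)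
      case empty then show ?case by simp
    next
      case (insert e F)
      then obtain m where m: "F \<subseteq> S m" by blast
      have "?R\<^sup>*\<^sup>* e0 e" using insert(4) unfolding component_def by blast
      from rtranclp_power[THEN iffD1, OF this] obtain i where "(?R ^^ i) e0 e" by blast
      then have "e \<in> S i" unfolding S_def by blast
      then have "insert e F \<subseteq> S (max i m)" using m mono[of i "max i m", OF max.cobounded1] mono[of m "max i m", OF max.cobounded2] by blast
      then show ?case by blast
    qed
  qed
  then obtain m where "?K \<subseteq> S m" using finK by blast
  then have "S m = ?K" using SK by blast
  then show ?thesis using bound[of m] by simp
qed

lemma sum_deg:
  assumes "finite K" "\<forall>e\<in>K. finite e"
  shows "(\<Sum>z\<in>\<Union>K. card {e\<in>K. z \<in> e}) = (\<Sum>e\<in>K. card e)"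
proof -
  have finU: "finite (\<Union>K)" using assms by blast
  have "(\<Sum>z\<in>\<Union>K. card {e\<in>K. z \<in> e}) = (\<Sum>z\<in>\<Union>K. \<Sum>e\<in>K. if z \<in> e then 1 else 0)"
  proof (rule sum.cong)
    fix z
    show "card {e\<in>K. z \<in> e} = (\<Sum>e\<in>K. if z \<in> e then 1 else 0)"
      using sum.inter_filter[OF assms(1), of "\<lambda>_. 1::nat" "\<lambda>e. z \<in> e"] by simp
  qed simp
  also have "\<dots> = (\<Sum>e\<in>K. \<Sum>z\<in>\<Union>K. if z \<in> e then 1 else 0)" by (rule sum.swap)
  also have "\<dots> = (\<Sum>e\<in>K. card e)"
  proof (rule sum.cong)
    fix e assume "e \<in> K"
    then have "{z\<in>\<Union>K. z \<in> e} = e" by blast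
    then show "(\<Sum>z\<in>\<Union>K. if z \<in> e then 1 else 0) = card e"
      using sum.inter_filter[OF finU, of "\<lambda>_. 1::nat" "\<lambda>z. z \<in> e"] by simp
  qed simp
  finally show ?thesis .
qed

lemma three_ends:
  assumes SG: "simple_graph V E" and P: "proper_edge_coloring E t g" and ab: "a \<noteq> b"
    and dist: "p \<noteq> q" "p \<noteq> r" "q \<noteq> r"
    and dp: "card {e\<in>component E g a b e0. p \<in> e} = 1"
    and dq: "card {e\<in>component E g a b e0. q \<in> e} = 1"
    and dr: "card {e\<in>component E g a b e0. r \<in> e} = 1"
  shows False
proof -
  let ?T = "two_color_edges E g a b"
  let ?K = "component E g a b e0"
  have fin: "finite E" using SG_finite[OF SG] .
  have two: "\<forall>e\<in>E. card e = 2" using SG_card2[OF SG] by blast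
  have TE: "?T \<subseteq> E" unfolding two_color_edges_def by blast
  have KE: "?K \<subseteq> E" using comp_sub_T TE by blast
  have finK: "finite ?K" using KE fin finite_subset by blast
  have fin2: "\<And>e. e \<in> ?K \<Longrightarrow> finite e \<and> card e = 2"
    using KE two by (metis card.infinite subset_iff zero_neq_numeral)
  have "{e\<in>?K. p \<in> e} \<noteq> {}" using dp by (metis card.empty zero_neq_one)
  then have "?K \<noteq> {}" by blast
  have e0T: "e0 \<in> ?T"
  proof (rule ccontr)
    assume nT: "e0 \<notin> ?T"
    { fix e assume "e \<in> ?K"
      then have "(\<lambda>x y. x \<in> ?T \<and> y \<in> ?T \<and> edges_adj x y)\<^sup>*\<^sup>* e0 e" "e \<in> ?T"
        unfolding component_def by auto
      then have False using nT by (cases rule: converse_rtranclpE) auto }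
    then show False using `?K \<noteq> {}` by blast
  qed
  have deg2: "card {e\<in>?K. z \<in> e} \<le> 2" for z
  proof -
    have "inj_on g {e\<in>?K. z \<in> e}" using uniq[OF P] KE unfolding inj_on_def by blast
    moreover have "g ` {e\<in>?K. z \<in> e} \<subseteq> {a,b}" using comp_sub_T unfolding two_color_edges_def by blast
    ultimately have "card {e\<in>?K. z \<in> e} \<le> card {a,b}" by (meson card_inj_on_le finite.emptyI finite.insertI)
    also have "\<dots> \<le> 2" by (simp add: card_insert_if)
    finally show ?thesis .
  qed
  let ?W = "\<Union>?K"
  have finW: "finite ?W" using finK fin2 by blast
  have inW: "z \<in> ?W" if "card {e\<in>?K. z \<in> e} = 1" for z
  proof -
    from that obtain e where "{e\<in>?K. z \<in> e} = {e}" by (rule card_1_singletonE)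
    then show ?thesis by blast
  qed
  have pqr: "{p,q,r} \<subseteq> ?W" using inW dp dq dr by blast
  have cW: "card {p,q,r} = 3" using dist by simp
  have sumK: "(\<Sum>z\<in>?W. card {e\<in>?K. z \<in> e}) = 2 * card ?K"
    using sum_deg[of ?K] finK fin2 by simp
  have split: "(\<Sum>z\<in>?W. card {e\<in>?K. z \<in> e}) =
      (\<Sum>z\<in>?W - {p,q,r}. card {e\<in>?K. z \<in> e}) + (\<Sum>z\<in>{p,q,r}. card {e\<in>?K. z \<in> e})"
    using sum.subset_diff[OF pqr finW] by simp
  have s3: "(\<Sum>z\<in>{p,q,r}. card {e\<in>?K. z \<in> e}) = 3" using dist dp dq dr by simp
  have "(\<Sum>z\<in>?W - {p,q,r}. card {e\<in>?K. z \<in> e}) \<le> (\<Sum>z\<in>?W - {p,q,r}. 2)"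
    using deg2 by (intro sum_mono) auto
  also have "\<dots> = 2 * card (?W - {p,q,r})" by simp
  also have "\<dots> = 2 * (card ?W - 3)" using card_Diff_subset[OF _ pqr] cW by simp
  finally have le: "(\<Sum>z\<in>?W - {p,q,r}. card {e\<in>?K. z \<in> e}) \<le> 2 * (card ?W - 3)" .
  have vb: "card ?W \<le> card ?K + 1" using vert_bound[OF fin two e0T] .
  have "card ?W \<ge> 3" using card_mono[OF finW pqr] cW by simp
  then show False using le vb sumK split s3 by linarith
qed




lemma Good_keep: "Good E g g' R \<Longrightarrow> e \<in> E \<Longrightarrow> g e \<in> {1,2} \<Longrightarrow> e \<notin> R \<Longrightarrow> g' e = g e"
  unfolding Good_def by blast

lemma Good_proper: "Good E g g' R \<Longrightarrow> proper_edge_coloring E 5 g \<Longrightarrow> proper_edge_coloring E 5 g'"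
  unfolding Good_def using reach_proper by blast

lemma comp_E: "component E g a b s \<subseteq> E"
  using comp_sub_T unfolding two_color_edges_def by blast

lemma comp_col: "e \<in> component E g a b s \<Longrightarrow> g e = a \<or> g e = b"
  using comp_sub_T unfolding two_color_edges_def by blast

lemma one_edge:
  assumes P: "proper_edge_coloring E t g" and LE: "L \<subseteq> E" and ex: "\<exists>e\<in>L. z \<in> e"
    and col: "\<forall>e\<in>L. z \<in> e \<longrightarrow> g e = c"
  shows "card {e\<in>L. z \<in> e} = 1"
proof -
  obtain e0 where e0: "e0 \<in> L" "z \<in> e0" using ex by blast
  have "{e\<in>L. z \<in> e} = {e0}"
  proof
    show "{e\<in>L. z \<in> e} \<subseteq> {e0}"
    proof
      fix e assume "e \<in> {e\<in>L. z \<in> e}"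
      then have "e \<in> L" "z \<in> e" by auto
      then have "e = e0" using uniq[OF P, of e e0 z] LE e0 col by blast
      then show "e \<in> {e0}" by simp
    qed
  qed (use e0 in blast)
  then show ?thesis by simp
qed

lemma sts:
  assumes SG: "simple_graph V E" and P: "proper_edge_coloring E 5 g"
    and r1: "r1 \<in> E" "r1 = {q0,q1}" "g r1 \<in> {1,2}"
    and r2: "r2 \<in> E" "r2 = {q1,q2}" "g r2 \<in> {1,2}"
    and dist: "q0 \<noteq> q1" "q1 \<noteq> q2" "q0 \<noteq> q2"
    and sg: "\<sigma> \<in> {3,4,5}" "miss E g q0 \<sigma>" "miss E g q2 \<sigma>"
    and ta: "\<tau> \<in> {3,4,5}" "miss E g q1 \<tau>"
  shows "\<exists>g'. Good E g g' {r1,r2} \<and> (g' r1 \<notin> {1,2} \<or> g' r2 \<notin> {1,2})"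
proof (cases "miss E g q1 \<sigma>")
  case True
  have "Good E g (g(r1 := \<sigma>)) {r1}"
    by (rule recolor[OF P r1(1,2) refl r1(3) sg(1) sg(2) True])
  then show ?thesis using sg(1) by (intro exI[of _ "g(r1 := \<sigma>)"]) (auto intro: Good_mono)
next
  case False
  then obtain s where s: "s \<in> E" "q1 \<in> s" "g s = \<sigma>" using not_miss[OF False] by blast
  have st: "\<sigma> \<noteq> \<tau>"
  proof
    assume "\<sigma> = \<tau>" then show False using False ta(2) by simp
  qed
  define L where "L = component E g \<sigma> \<tau> s"
  define g1 where "g1 = swap_on L \<sigma> \<tau> g"
  have G1: "Good E g g1 {}" unfolding g1_def L_def by (rule free_swap[of \<sigma> \<tau> s E g, OF sg(1) ta(1) st s(1,3)])
  have P1: "proper_edge_coloring E 5 g1" using Good_proper[OF G1 P] .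
  have m1: "miss E g1 q1 \<sigma>" unfolding g1_def L_def by (rule swap_miss_new[OF P s ta(2)])
  have k1: "g1 r1 = g r1" using Good_keep[OF G1 r1(1) r1(3)] by simp
  have k2: "g1 r2 = g r2" using Good_keep[OF G1 r2(1) r2(3)] by simp
  have sL: "s \<in> L" unfolding L_def using s by (intro comp_self) (auto simp: two_color_edges_def)
  show ?thesis
  proof (cases "\<forall>e\<in>L. q0 \<notin> e")
    case True
    have m0: "miss E g1 q0 \<sigma>" unfolding g1_def using swap_unchanged[OF True] sg(2) by simp
    have "Good E g1 (g1(r1 := \<sigma>)) {r1}"
      by (rule recolor[OF P1 r1(1,2) k1 r1(3) sg(1) m0 m1])
    then have "Good E g (g1(r1 := \<sigma>)) ({} \<union> {r1})" using Good_trans[OF G1] by blast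
    then show ?thesis using sg(1) by (intro exI[of _ "g1(r1 := \<sigma>)"]) (auto intro: Good_mono)
  next
    case F0: False
    show ?thesis
    proof (cases "\<forall>e\<in>L. q2 \<notin> e")
      case True
      have m2: "miss E g1 q2 \<sigma>" unfolding g1_def using swap_unchanged[OF True] sg(3) by simp
      have "Good E g1 (g1(r2 := \<sigma>)) {r2}"
        by (rule recolor[OF P1 r2(1,2) k2 r2(3) sg(1) m1 m2])
      then have "Good E g (g1(r2 := \<sigma>)) ({} \<union> {r2})" using Good_trans[OF G1] by blast
      then show ?thesis using sg(1) by (intro exI[of _ "g1(r2 := \<sigma>)"]) (auto intro: Good_mono)
    next
      case F2: False
      have LE: "L \<subseteq> E" unfolding L_def by (rule comp_E)
      have c0: "card {e\<in>L. q0 \<in> e} = 1"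
      proof (rule one_edge[OF P LE])
        show "\<exists>e\<in>L. q0 \<in> e" using F0 by blast
        show "\<forall>e\<in>L. q0 \<in> e \<longrightarrow> g e = \<tau>"
          using comp_col[of _ E g \<sigma> \<tau> s] sg(2) LE unfolding L_def miss_def by blast
      qed
      have c2: "card {e\<in>L. q2 \<in> e} = 1"
      proof (rule one_edge[OF P LE])
        show "\<exists>e\<in>L. q2 \<in> e" using F2 by blast
        show "\<forall>e\<in>L. q2 \<in> e \<longrightarrow> g e = \<tau>"
          using comp_col[of _ E g \<sigma> \<tau> s] sg(3) LE unfolding L_def miss_def by blast
      qed
      have c1: "card {e\<in>L. q1 \<in> e} = 1"
      proof (rule one_edge[OF P LE])
        show "\<exists>e\<in>L. q1 \<in> e" using sL s by blast
        show "\<forall>e\<in>L. q1 \<in> e \<longrightarrow> g e = \<sigma>"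
          using comp_col[of _ E g \<sigma> \<tau> s] ta(2) LE unfolding L_def miss_def by blast
      qed
      have False using three_ends[OF SG P st dist(1) dist(3) dist(2)] c0 c1 c2 unfolding L_def by blast
      then show ?thesis ..
    qed
  qed
qed




lemma neq_helper:
  assumes "\<not> (\<exists>c\<in>S. P c \<and> Q c)" "c \<in> S" "P c" "Q d"
  shows "c \<noteq> d"
proof
  assume "c = d" then have "Q c" using assms(4) by simp
  then show False using assms(1-3) by blast
qed

lemma core:
  assumes SG: "simple_graph V E" and P: "proper_edge_coloring E 5 g"
    and deg: "\<And>z. card {e\<in>E. z \<in> e} \<le> 4"
    and b: "b \<in> E" "b = {p0,p1}" "g b = 1"
    and e2: "e2 \<in> E" "e2 = {p1,p2}" "g e2 = 2"
    and e3: "e3 \<in> E" "e3 = {p2,p3}" "g e3 = 1"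
    and x0: "x0 \<in> E" "p0 \<in> x0" "g x0 = 2"
    and e4: "e4 \<in> E" "p3 \<in> e4" "g e4 = 2"
    and dist: "p0 \<noteq> p1" "p1 \<noteq> p2" "p2 \<noteq> p3" "p0 \<noteq> p2" "p1 \<noteq> p3" "p0 \<noteq> p3"
  shows "\<exists>g'. Good E g g' {b,e2,e3} \<and> (g' b \<notin> {1,2} \<or> g' e2 \<notin> {1,2} \<or> g' e3 \<notin> {1,2})"
proof -
  have fin: "finite E" using SG_finite[OF SG] .
  have M0: "\<exists>c\<in>{3,4,5}. miss E g p0 c" by (rule miss_exists[OF P fin deg b(1) _ b(3) x0]) (simp add: b(2))
  have M1: "\<exists>c\<in>{3,4,5}. miss E g p1 c" by (rule miss_exists[OF P fin deg b(1) _ b(3) e2(1) _ e2(3)]) (simp_all add: b(2) e2(2))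
  have M2: "\<exists>c\<in>{3,4,5}. miss E g p2 c" by (rule miss_exists[OF P fin deg e3(1) _ e3(3) e2(1) _ e2(3)]) (simp_all add: e3(2) e2(2))
  have M3: "\<exists>c\<in>{3,4,5}. miss E g p3 c" by (rule miss_exists[OF P fin deg e3(1) _ e3(3) e4]) (simp add: e3(2))
  have b12: "g b \<in> {1,2}" "g e2 \<in> {1,2}" "g e3 \<in> {1,2}" using b e2 e3 by auto
  show ?thesis
  proof (cases "\<exists>c\<in>{3,4,5}. miss E g p0 c \<and> miss E g p1 c")
    case True
    then obtain c where c: "c \<in> {3,4,5}" "miss E g p0 c" "miss E g p1 c" by blast
    have "Good E g (g(b := c)) {b}" by (rule recolor[OF P b(1,2) refl b12(1) c])
    then show ?thesis using c(1) by (intro exI[of _ "g(b := c)"]) (auto intro: Good_mono)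
  next
    case A1: False
    show ?thesis
    proof (cases "\<exists>c\<in>{3,4,5}. miss E g p1 c \<and> miss E g p2 c")
      case True
      then obtain c where c: "c \<in> {3,4,5}" "miss E g p1 c" "miss E g p2 c" by blast
      have "Good E g (g(e2 := c)) {e2}" by (rule recolor[OF P e2(1,2) refl b12(2) c])
      then show ?thesis using c(1) by (intro exI[of _ "g(e2 := c)"]) (auto intro: Good_mono)
    next
      case A2: False
      show ?thesis
      proof (cases "\<exists>c\<in>{3,4,5}. miss E g p2 c \<and> miss E g p3 c")
        case True
        then obtain c where c: "c \<in> {3,4,5}" "miss E g p2 c" "miss E g p3 c" by blast
        have "Good E g (g(e3 := c)) {e3}" by (rule recolor[OF P e3(1,2) refl b12(3) c])
        then show ?thesis using c(1) by (intro exI[of _ "g(e3 := c)"]) (auto intro: Good_mono)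
      next
        case A3: False
        show ?thesis
        proof (cases "\<exists>c\<in>{3,4,5}. miss E g p0 c \<and> miss E g p2 c")
          case True
          then obtain c where c: "c \<in> {3,4,5}" "miss E g p0 c" "miss E g p2 c" by blast
          obtain t where t: "t \<in> {3,4,5}" "miss E g p1 t" using M1 by blast
          obtain g' where "Good E g g' {b,e2}" "g' b \<notin> {1,2} \<or> g' e2 \<notin> {1,2}"
            using sts[OF SG P b(1,2) b12(1) e2(1,2) b12(2) dist(1,2,4) c t] by blast
          then show ?thesis by (intro exI[of _ g']) (auto intro: Good_mono)
        next
          case B1: False
          show ?thesis
          proof (cases "\<exists>c\<in>{3,4,5}. miss E g p1 c \<and> miss E g p3 c")
            case True
            then obtain c where c: "c \<in> {3,4,5}" "miss E g p1 c" "miss E g p3 c" by blast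
            obtain t where t: "t \<in> {3,4,5}" "miss E g p2 t" using M2 by blast
            obtain g' where "Good E g g' {e2,e3}" "g' e2 \<notin> {1,2} \<or> g' e3 \<notin> {1,2}"
              using sts[OF SG P e2(1,2) b12(2) e3(1,2) b12(3) dist(2,3,5) c t] by blast
            then show ?thesis by (intro exI[of _ g']) (auto intro: Good_mono)
          next
            case B2: False
            obtain \<alpha> where al: "\<alpha> \<in> {3,4,5}" "miss E g p0 \<alpha>" using M0 by blast
            obtain \<beta> where be: "\<beta> \<in> {3,4,5}" "miss E g p1 \<beta>" using M1 by blast
            obtain \<gamma> where ga: "\<gamma> \<in> {3,4,5}" "miss E g p2 \<gamma>" using M2 by blast
            obtain \<delta> where de: "\<delta> \<in> {3,4,5}" "miss E g p3 \<delta>" using M3 by blast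
            have "\<alpha> \<noteq> \<beta>" by (rule neq_helper[OF A1 al be(2)])
            moreover have "\<beta> \<noteq> \<gamma>" by (rule neq_helper[OF A2 be ga(2)])
            moreover have "\<alpha> \<noteq> \<gamma>" by (rule neq_helper[OF B1 al ga(2)])
            moreover have "\<gamma> \<noteq> \<delta>" by (rule neq_helper[OF A3 ga de(2)])
            moreover have "\<beta> \<noteq> \<delta>" by (rule neq_helper[OF B2 be de(2)])
            ultimately have da: "\<delta> = \<alpha>" using al(1) be(1) ga(1) de(1) by auto
            have "\<not> miss E g p1 \<alpha>" using A1 al by meson
            then obtain s where s: "s \<in> E" "p1 \<in> s" "g s = \<alpha>" using not_miss[OF `\<not> miss E g p1 \<alpha>`] by blast
            have ab: "\<alpha> \<noteq> \<beta>" by (rule neq_helper[OF A1 al be(2)])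
            define L where "L = component E g \<alpha> \<beta> s"
            define g1 where "g1 = swap_on L \<alpha> \<beta> g"
            have G1: "Good E g g1 {}" unfolding g1_def L_def
              by (rule free_swap[of \<alpha> \<beta> s E g, OF al(1) be(1) ab s(1,3)])
            have P1: "proper_edge_coloring E 5 g1" using Good_proper[OF G1 P] .
            have m1: "miss E g1 p1 \<alpha>" unfolding g1_def L_def by (rule swap_miss_new[OF P s be(2)])
            have k: "g1 b = g b" "g1 e2 = g e2" "g1 e3 = g e3"
              using Good_keep[OF G1 b(1) b12(1)] Good_keep[OF G1 e2(1) b12(2)] Good_keep[OF G1 e3(1) b12(3)]
              by simp_all
            have sL: "s \<in> L" unfolding L_def using s by (intro comp_self) (auto simp: two_color_edges_def)
            have LE: "L \<subseteq> E" unfolding L_def by (rule comp_E)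
            show ?thesis
            proof (cases "\<forall>e\<in>L. p0 \<notin> e")
              case True
              have m0: "miss E g1 p0 \<alpha>" unfolding g1_def using swap_unchanged[OF True] al(2) by simp
              have "Good E g1 (g1(b := \<alpha>)) {b}"
                by (rule recolor[OF P1 b(1,2) k(1) b12(1) al(1) m0 m1])
              then have "Good E g (g1(b := \<alpha>)) ({} \<union> {b})" using Good_trans[OF G1] by blast
              then show ?thesis using al(1) by (intro exI[of _ "g1(b := \<alpha>)"]) (auto intro: Good_mono)
            next
              case F0: False
              have c0: "card {e\<in>L. p0 \<in> e} = 1"
              proof (rule one_edge[OF P LE])
                show "\<exists>e\<in>L. p0 \<in> e" using F0 by blast
                show "\<forall>e\<in>L. p0 \<in> e \<longrightarrow> g e = \<beta>"
                  using comp_col[of _ E g \<alpha> \<beta> s] al(2) LE unfolding L_def miss_def by blast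
              qed
              have c1: "card {e\<in>L. p1 \<in> e} = 1"
              proof (rule one_edge[OF P LE])
                show "\<exists>e\<in>L. p1 \<in> e" using sL s by blast
                show "\<forall>e\<in>L. p1 \<in> e \<longrightarrow> g e = \<alpha>"
                  using comp_col[of _ E g \<alpha> \<beta> s] be(2) LE unfolding L_def miss_def by blast
              qed
              have N3: "\<forall>e\<in>L. p3 \<notin> e"
              proof (rule ccontr)
                assume "\<not> (\<forall>e\<in>L. p3 \<notin> e)"
                then have ex3: "\<exists>e\<in>L. p3 \<in> e" by blast
                have c3: "card {e\<in>L. p3 \<in> e} = 1"
                proof (rule one_edge[OF P LE ex3])
                  show "\<forall>e\<in>L. p3 \<in> e \<longrightarrow> g e = \<beta>"
                    using comp_col[of _ E g \<alpha> \<beta> s] de(2) da LE unfolding L_def miss_def by blast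
                qed
                show False using three_ends[OF SG P ab dist(1) dist(6) dist(5)] c0 c1 c3
                  unfolding L_def by blast
              qed
              have m3: "miss E g1 p3 \<alpha>" unfolding g1_def using swap_unchanged[OF N3] de(2) da by simp
              have h1: "g1 e3 = 1" "g1 e2 = 2" using k e3(3) e2(3) by simp_all
              have pe: "p2 \<in> e3" "p2 \<in> e2" using e3(2) e2(2) by simp_all
              have M2': "\<exists>c\<in>{3,4,5}. miss E g1 p2 c"
                by (rule miss_exists[OF P1 fin deg e3(1) pe(1) h1(1) e2(1) pe(2) h1(2)])
              then obtain t where t: "t \<in> {3,4,5}" "miss E g1 p2 t" by blast
              have b12': "g1 e2 \<in> {1,2}" "g1 e3 \<in> {1,2}" using k b12 by simp_all
              obtain g' where g': "Good E g1 g' {e2,e3}" "g' e2 \<notin> {1,2} \<or> g' e3 \<notin> {1,2}"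
                using sts[OF SG P1 e2(1,2) b12'(1) e3(1,2) b12'(2) dist(2,3,5) al(1) m1 m3 t] by blast
              have "Good E g g' ({} \<union> {e2,e3})" using Good_trans[OF G1 g'(1)] .
              then show ?thesis using g'(2) by (intro exI[of _ g']) (auto intro: Good_mono)
            qed
          qed
        qed
      qed
    qed
  qed
qed




definition Yset :: "'a set set \<Rightarrow> ('a set \<Rightarrow> nat) \<Rightarrow> ('a set \<Rightarrow> nat) \<Rightarrow> 'a set \<Rightarrow> 'a \<Rightarrow> 'a set set \<Rightarrow> bool" where
  "Yset E h g xy y A \<longleftrightarrow> A \<subseteq> two_color_edges E g 1 2 \<and> (\<forall>e\<in>A. g e = 1 \<longrightarrow> h e \<noteq> 1) \<and>
     (\<forall>e\<in>A. \<forall>z\<in>e. \<forall>e'\<in>E. z \<in> e' \<longrightarrow> g e' \<in> {1,2} \<longrightarrow> e' \<in> A \<or> e' = xy) \<and>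
     (\<forall>e'\<in>E. y \<in> e' \<longrightarrow> g e' \<in> {1,2} \<longrightarrow> e' \<in> A \<or> e' = xy)"

definition Ygood :: "'a set set \<Rightarrow> ('a set \<Rightarrow> nat) \<Rightarrow> ('a set \<Rightarrow> nat) \<Rightarrow> 'a set \<Rightarrow> 'a \<Rightarrow> bool" where
  "Ygood E h g xy y \<longleftrightarrow> (\<exists>A. Yset E h g xy y A)"

lemma shrink_refl: "shrink E g g" unfolding shrink_def by simp

lemma shrink_trans: "shrink E f g \<Longrightarrow> shrink E g g' \<Longrightarrow> shrink E f g'"
  unfolding shrink_def
proof (intro ballI impI)
  fix e assume a: "\<forall>e\<in>E. g e \<in> {1, 2} \<longrightarrow> g e = f e" "\<forall>e\<in>E. g' e \<in> {1, 2} \<longrightarrow> g' e = g e"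
    and e: "e \<in> E" "g' e \<in> {1,2}"
  then have "g' e = g e" by blast
  moreover then have "g e \<in> {1,2}" using e by simp
  ultimately show "g' e = f e" using a(1) e(1) by metis
qed

lemma Ygood_mono:
  assumes Y: "Ygood E h g xy y" and sh: "shrink E g g'"
  shows "Ygood E h g' xy y"
proof -
  obtain A where YA: "Yset E h g xy y A" using Y unfolding Ygood_def by blast
  note A0 = YA[unfolded Yset_def]
  note A = conjunct1[OF A0] conjunct1[OF conjunct2[OF A0]] conjunct1[OF conjunct2[OF conjunct2[OF A0]]]
     conjunct2[OF conjunct2[OF conjunct2[OF A0]]]
  have AE: "A \<subseteq> E" using A(1) unfolding two_color_edges_def by blast
  let ?A = "{e\<in>A. g' e \<in> {1,2}}"
  have s: "\<And>e. e \<in> E \<Longrightarrow> g' e \<in> {1,2} \<Longrightarrow> g' e = g e" using sh unfolding shrink_def by blast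
  show ?thesis unfolding Ygood_def Yset_def
  proof (intro exI[of _ ?A] conjI)
    show "?A \<subseteq> two_color_edges E g' 1 2" using AE unfolding two_color_edges_def by auto
    show "\<forall>e\<in>?A. g' e = 1 \<longrightarrow> h e \<noteq> 1"
    proof (intro ballI impI)
      fix e assume e: "e \<in> ?A" "g' e = 1"
      then have "g e = 1" using s[of e] AE by auto
      then show "h e \<noteq> 1" using A(2) e(1) by blast
    qed
    show "\<forall>e\<in>?A. \<forall>z\<in>e. \<forall>e'\<in>E. z \<in> e' \<longrightarrow> g' e' \<in> {1,2} \<longrightarrow> e' \<in> ?A \<or> e' = xy"
    proof (intro ballI impI)
      fix e z e' assume "e \<in> ?A" "z \<in> e" "e' \<in> E" "z \<in> e'" "g' e' \<in> {1,2}"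
      then have "g e' \<in> {1,2}" using s[of e'] by simp
      then have "e' \<in> A \<or> e' = xy" using A(3) `e \<in> ?A` `z \<in> e` `e' \<in> E` `z \<in> e'` by blast
      then show "e' \<in> ?A \<or> e' = xy" using `g' e' \<in> {1,2}` by blast
    qed
    show "\<forall>e'\<in>E. y \<in> e' \<longrightarrow> g' e' \<in> {1,2} \<longrightarrow> e' \<in> ?A \<or> e' = xy"
    proof (intro ballI impI)
      fix e' assume "e' \<in> E" "y \<in> e'" "g' e' \<in> {1,2}"
      then have "g e' \<in> {1,2}" using s[of e'] by simp
      then have "e' \<in> A \<or> e' = xy" using A(4) `e' \<in> E` `y \<in> e'` by blast
      then show "e' \<in> ?A \<or> e' = xy" using `g' e' \<in> {1,2}` by blast
    qed
  qed
qed

lemma vtx: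
  assumes P: "proper_edge_coloring E t g" and sh: "shrink E g g'"
    and c1: "(\<exists>e1\<in>S. e1 \<in> E \<and> z \<in> e1 \<and> g e1 = 1) \<or> (\<forall>e\<in>E. z \<in> e \<longrightarrow> g e = 1 \<longrightarrow> g' e \<noteq> 1)"
    and c2: "(\<exists>e1\<in>S. e1 \<in> E \<and> z \<in> e1 \<and> g e1 = 2) \<or> (\<forall>e\<in>E. z \<in> e \<longrightarrow> g e = 2 \<longrightarrow> g' e \<noteq> 2)"
  shows "\<forall>e'\<in>E. z \<in> e' \<longrightarrow> g' e' \<in> {1,2} \<longrightarrow> e' \<in> S"
proof (intro ballI impI)
  fix e' assume e': "e' \<in> E" "z \<in> e'" "g' e' \<in> {1,2}"
  then have eq: "g' e' = g e'" using sh unfolding shrink_def by blast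
  show "e' \<in> S"
  proof (cases "g' e' = 1")
    case True
    then have "g e' = 1" using eq by simp
    show ?thesis
    proof (cases "\<exists>e1\<in>S. e1 \<in> E \<and> z \<in> e1 \<and> g e1 = 1")
      case True
      then obtain e1 where "e1 \<in> S" "e1 \<in> E" "z \<in> e1" "g e1 = 1" by blast
      then show ?thesis using uniq[OF P e'(1) _ e'(2), of e1] `g e' = 1` by simp
    next
      case False
      then show ?thesis using c1 e' `g e' = 1` `g' e' = 1` by blast
    qed
  next
    case False
    then have "g' e' = 2" using e'(3) by simp
    then have "g e' = 2" using eq by simp
    show ?thesis
    proof (cases "\<exists>e1\<in>S. e1 \<in> E \<and> z \<in> e1 \<and> g e1 = 2")
      case True
      then obtain e1 where "e1 \<in> S" "e1 \<in> E" "z \<in> e1" "g e1 = 2" by blast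
      then show ?thesis using uniq[OF P e'(1) _ e'(2), of e1] `g e' = 2` by simp
    next
      case False
      then show ?thesis using c2 e' `g e' = 2` `g' e' = 2` by blast
    qed
  qed
qed




lemma Ygood_intro:
  assumes "A \<subseteq> two_color_edges E g 1 2" "\<forall>e\<in>A. g e = 1 \<longrightarrow> h e \<noteq> 1"
    "\<forall>e\<in>A. \<forall>z\<in>e. \<forall>e'\<in>E. z \<in> e' \<longrightarrow> g e' \<in> {1,2} \<longrightarrow> e' \<in> A \<union> {xy}"
    "\<forall>e'\<in>E. y \<in> e' \<longrightarrow> g e' \<in> {1,2} \<longrightarrow> e' \<in> A \<union> {xy}"
  shows "Ygood E h g xy y"
  unfolding Ygood_def Yset_def
proof (intro exI[of _ A] conjI)
  show "A \<subseteq> two_color_edges E g 1 2" "\<forall>e\<in>A. g e = 1 \<longrightarrow> h e \<noteq> 1" using assms(1,2) .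
  show "\<forall>e\<in>A. \<forall>z\<in>e. \<forall>e'\<in>E. z \<in> e' \<longrightarrow> g e' \<in> {1,2} \<longrightarrow> e' \<in> A \<or> e' = xy"
  proof (intro ballI impI)
    fix e z e' assume "e \<in> A" "z \<in> e" "e' \<in> E" "z \<in> e'" "g e' \<in> {1,2}"
    then have "e' \<in> A \<union> {xy}" using assms(3) by blast
    then show "e' \<in> A \<or> e' = xy" by blast
  qed
  show "\<forall>e'\<in>E. y \<in> e' \<longrightarrow> g e' \<in> {1,2} \<longrightarrow> e' \<in> A \<or> e' = xy"
  proof (intro ballI impI)
    fix e' assume "e' \<in> E" "y \<in> e'" "g e' \<in> {1,2}"
    then have "e' \<in> A \<union> {xy}" using assms(4) by blast
    then show "e' \<in> A \<or> e' = xy" by blast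
  qed
qed

lemma optI: "w \<in> S \<Longrightarrow> w \<in> E \<Longrightarrow> z \<in> w \<Longrightarrow> g w = k \<Longrightarrow> (\<exists>e1\<in>S. e1 \<in> E \<and> z \<in> e1 \<and> g e1 = k) \<or> Q"
  by blast

lemma clos_vtx:
  assumes "\<forall>e\<in>A. \<forall>z\<in>e. z \<in> Vs" "\<forall>z\<in>Vs. \<forall>e'\<in>E. z \<in> e' \<longrightarrow> g e' \<in> {1,2} \<longrightarrow> e' \<in> S"
  shows "\<forall>e\<in>A. \<forall>z\<in>e. \<forall>e'\<in>E. z \<in> e' \<longrightarrow> g e' \<in> {1,2} \<longrightarrow> e' \<in> S"
  using assms by blast

lemma Y0:
  assumes P: "proper_edge_coloring E t g" and sh: "shrink E g g'"
    and xy: "xy \<in> E" "y \<in> xy" "g xy = 2"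
    and N0: "\<forall>e\<in>E. y \<in> e \<longrightarrow> g e = 1 \<longrightarrow> g' e \<noteq> 1"
  shows "Ygood E h g' xy y"
proof (rule Ygood_intro[where A = "{}"])
  show "\<forall>e'\<in>E. y \<in> e' \<longrightarrow> g' e' \<in> {1,2} \<longrightarrow> e' \<in> {} \<union> {xy}"
    by (rule vtx[OF P sh disjI2[OF N0] optI[where w=xy]]) (use xy in simp_all)
qed auto

lemma Y1:
  assumes P: "proper_edge_coloring E t g" and sh: "shrink E g g'"
    and xy: "xy \<in> E" "y \<in> xy" "g xy = 2"
    and b: "b \<in> E" "b = {y,v1}" "g b = 1" "g' b = 1" "h b \<noteq> 1"
    and N1: "\<forall>e\<in>E. v1 \<in> e \<longrightarrow> g e = 2 \<longrightarrow> g' e \<noteq> 2"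
  shows "Ygood E h g' xy y"
proof (rule Ygood_intro[where A = "{b}"])
  have Vy: "\<forall>e'\<in>E. y \<in> e' \<longrightarrow> g' e' \<in> {1,2} \<longrightarrow> e' \<in> {b} \<union> {xy}"
    by (rule vtx[OF P sh optI[where w=b] optI[where w=xy]]) (use xy b in simp_all)
  have V1: "\<forall>e'\<in>E. v1 \<in> e' \<longrightarrow> g' e' \<in> {1,2} \<longrightarrow> e' \<in> {b} \<union> {xy}"
    by (rule vtx[OF P sh optI[where w=b] disjI2[OF N1]]) (use b in simp_all)
  show "\<forall>e'\<in>E. y \<in> e' \<longrightarrow> g' e' \<in> {1,2} \<longrightarrow> e' \<in> {b} \<union> {xy}" by (rule Vy)
  show "\<forall>e\<in>{b}. \<forall>z\<in>e. \<forall>e'\<in>E. z \<in> e' \<longrightarrow> g' e' \<in> {1,2} \<longrightarrow> e' \<in> {b} \<union> {xy}"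
    by (rule clos_vtx[where Vs="{y,v1}"]) (use Vy V1 b(2) in simp_all)
  show "{b} \<subseteq> two_color_edges E g' 1 2" using b unfolding two_color_edges_def by simp
  show "\<forall>e\<in>{b}. g' e = 1 \<longrightarrow> h e \<noteq> 1" using b by simp
qed

lemma Y2:
  assumes P: "proper_edge_coloring E t g" and sh: "shrink E g g'"
    and xy: "xy \<in> E" "y \<in> xy" "g xy = 2"
    and b: "b \<in> E" "b = {y,v1}" "g b = 1" "g' b = 1" "h b \<noteq> 1"
    and e2: "e2 \<in> E" "e2 = {v1,v2}" "g e2 = 2" "g' e2 = 2"
    and N2: "\<forall>e\<in>E. v2 \<in> e \<longrightarrow> g e = 1 \<longrightarrow> g' e \<noteq> 1"
  shows "Ygood E h g' xy y"
proof (rule Ygood_intro[where A = "{b,e2}"])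
  have Vy: "\<forall>e'\<in>E. y \<in> e' \<longrightarrow> g' e' \<in> {1,2} \<longrightarrow> e' \<in> {b,e2} \<union> {xy}"
    by (rule vtx[OF P sh optI[where w=b] optI[where w=xy]]) (use xy b in simp_all)
  have V1: "\<forall>e'\<in>E. v1 \<in> e' \<longrightarrow> g' e' \<in> {1,2} \<longrightarrow> e' \<in> {b,e2} \<union> {xy}"
    by (rule vtx[OF P sh optI[where w=b] optI[where w=e2]]) (use b e2 in simp_all)
  have V2: "\<forall>e'\<in>E. v2 \<in> e' \<longrightarrow> g' e' \<in> {1,2} \<longrightarrow> e' \<in> {b,e2} \<union> {xy}"
    by (rule vtx[OF P sh disjI2[OF N2] optI[where w=e2]]) (use e2 in simp_all)
  show "\<forall>e'\<in>E. y \<in> e' \<longrightarrow> g' e' \<in> {1,2} \<longrightarrow> e' \<in> {b,e2} \<union> {xy}" by (rule Vy)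
  show "\<forall>e\<in>{b,e2}. \<forall>z\<in>e. \<forall>e'\<in>E. z \<in> e' \<longrightarrow> g' e' \<in> {1,2} \<longrightarrow> e' \<in> {b,e2} \<union> {xy}"
    by (rule clos_vtx[where Vs="{y,v1,v2}"]) (use Vy V1 V2 b(2) e2(2) in simp_all)
  show "{b,e2} \<subseteq> two_color_edges E g' 1 2" using b e2 unfolding two_color_edges_def by simp
  show "\<forall>e\<in>{b,e2}. g' e = 1 \<longrightarrow> h e \<noteq> 1" using b e2 by simp
qed

lemma Y3:
  assumes P: "proper_edge_coloring E t g" and sh: "shrink E g g'"
    and xy: "xy \<in> E" "y \<in> xy" "g xy = 2"
    and b: "b \<in> E" "b = {y,v1}" "g b = 1" "g' b = 1" "h b \<noteq> 1"
    and e2: "e2 \<in> E" "e2 = {v1,v2}" "g e2 = 2" "g' e2 = 2"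
    and e3: "e3 \<in> E" "e3 = {v2,v3}" "g e3 = 1" "g' e3 = 1" "h e3 \<noteq> 1"
    and N3: "\<forall>e\<in>E. v3 \<in> e \<longrightarrow> g e = 2 \<longrightarrow> g' e \<noteq> 2"
  shows "Ygood E h g' xy y"
proof (rule Ygood_intro[where A = "{b,e2,e3}"])
  have Vy: "\<forall>e'\<in>E. y \<in> e' \<longrightarrow> g' e' \<in> {1,2} \<longrightarrow> e' \<in> {b,e2,e3} \<union> {xy}"
    by (rule vtx[OF P sh optI[where w=b] optI[where w=xy]]) (use xy b in simp_all)
  have V1: "\<forall>e'\<in>E. v1 \<in> e' \<longrightarrow> g' e' \<in> {1,2} \<longrightarrow> e' \<in> {b,e2,e3} \<union> {xy}"
    by (rule vtx[OF P sh optI[where w=b] optI[where w=e2]]) (use b e2 in simp_all)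
  have V2: "\<forall>e'\<in>E. v2 \<in> e' \<longrightarrow> g' e' \<in> {1,2} \<longrightarrow> e' \<in> {b,e2,e3} \<union> {xy}"
    by (rule vtx[OF P sh optI[where w=e3] optI[where w=e2]]) (use e2 e3 in simp_all)
  have V3: "\<forall>e'\<in>E. v3 \<in> e' \<longrightarrow> g' e' \<in> {1,2} \<longrightarrow> e' \<in> {b,e2,e3} \<union> {xy}"
    by (rule vtx[OF P sh optI[where w=e3] disjI2[OF N3]]) (use e3 in simp_all)
  show "\<forall>e'\<in>E. y \<in> e' \<longrightarrow> g' e' \<in> {1,2} \<longrightarrow> e' \<in> {b,e2,e3} \<union> {xy}" by (rule Vy)
  show "\<forall>e\<in>{b,e2,e3}. \<forall>z\<in>e. \<forall>e'\<in>E. z \<in> e' \<longrightarrow> g' e' \<in> {1,2} \<longrightarrow> e' \<in> {b,e2,e3} \<union> {xy}"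
    by (rule clos_vtx[where Vs="{y,v1,v2,v3}"]) (use Vy V1 V2 V3 b(2) e2(2) e3(2) in simp_all)
  show "{b,e2,e3} \<subseteq> two_color_edges E g' 1 2" using b e2 e3 unfolding two_color_edges_def by simp
  show "\<forall>e\<in>{b,e2,e3}. g' e = 1 \<longrightarrow> h e \<noteq> 1" using b e2 e3 by simp
qed




definition walkT :: "'a set set \<Rightarrow> ('a set \<Rightarrow> nat) \<Rightarrow> 'a set \<Rightarrow> nat \<Rightarrow> 'a set \<Rightarrow> bool" where
  "walkT E g e0 n e \<longleftrightarrow>
     ((\<lambda>u v. u \<in> two_color_edges E g 1 2 \<and> v \<in> two_color_edges E g 1 2 \<and> edges_adj u v) ^^ n) e0 e"

lemma edge_other:
  assumes SG: "simple_graph V E" and e: "e \<in> E" "y \<in> e"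
  shows "\<exists>v. e = {y,v} \<and> v \<noteq> y"
proof -
  obtain u w where uw: "u \<noteq> w" "e = {u,w}" using SG e(1) unfolding simple_graph_def by blast
  show ?thesis
  proof (cases "y = u")
    case True then show ?thesis using uw by blast
  next
    case False then have "y = w" using uw e(2) by blast
    then show ?thesis using uw by (intro exI[of _ u]) auto
  qed
qed

lemma side:
  assumes SG: "simple_graph V E" and P: "proper_edge_coloring E 5 g"
    and deg: "\<And>z. card {e\<in>E. z \<in> e} \<le> 4"
    and xyE: "{x,y} \<in> E" and gxy: "g {x,y} = 2"
    and bad: "\<And>e n. e \<in> E \<Longrightarrow> g e = 1 \<Longrightarrow> n \<le> 3 \<Longrightarrow> walkT E g {x,y} n e \<Longrightarrow> h e \<noteq> 1"
  shows "\<exists>g'. (interchange E 5)\<^sup>*\<^sup>* g g' \<and> shrink E g g' \<and> g' {x,y} = 2 \<and>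
           (\<forall>e\<in>E. g e = 1 \<longrightarrow> g' e \<noteq> 1 \<longrightarrow> h e \<noteq> 1) \<and> Ygood E h g' {x,y} y"
proof -
  let ?xy = "{x,y}"
  let ?T = "two_color_edges E g 1 2"
  let ?R = "\<lambda>u v. u \<in> ?T \<and> v \<in> ?T \<and> edges_adj u v"
  have xyT: "?xy \<in> ?T" using xyE gxy unfolding two_color_edges_def by simp
  have yxy: "y \<in> ?xy" by simp
  have triv: "(interchange E 5)\<^sup>*\<^sup>* g g \<and> shrink E g g \<and> g ?xy = 2 \<and>
           (\<forall>e\<in>E. g e = 1 \<longrightarrow> g e \<noteq> 1 \<longrightarrow> h e \<noteq> 1)" using gxy shrink_refl by auto
  show ?thesis
  proof (cases "\<exists>b\<in>E. y \<in> b \<and> g b = 1")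
    case False
    have "Ygood E h g ?xy y"
      by (rule Y0[where h=h, OF P shrink_refl[of E g] xyE yxy gxy]) (use False in blast)
    then show ?thesis using triv by blast
  next
    case True
    then obtain b where b: "b \<in> E" "y \<in> b" "g b = 1" by blast
    obtain v1 where v1: "b = {y,v1}" "v1 \<noteq> y" using edge_other[OF SG b(1,2)] by blast
    have bT: "b \<in> ?T" using b unfolding two_color_edges_def by simp
    have xyb: "?xy \<noteq> b" using gxy b(3) by auto
    have Rxyb: "?R ?xy b" using xyT bT xyb b(2) unfolding edges_adj_def by blast
    have "walkT E g ?xy 1 b" unfolding walkT_def relpowp_1 by (rule Rxyb)
    then have hb: "h b \<noteq> 1" using bad[OF b(1) b(3), of 1] by simp
    have v1x: "v1 \<noteq> x"
    proof
      assume "v1 = x" then have "b = ?xy" using v1(1) by (simp add: insert_commute)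
      then show False using xyb by simp
    qed
    show ?thesis
    proof (cases "\<exists>e2\<in>E. v1 \<in> e2 \<and> g e2 = 2")
      case False
      have "Ygood E h g ?xy y"
        by (rule Y1[where h=h, OF P shrink_refl[of E g] xyE yxy gxy b(1) v1(1) b(3) b(3) hb]) (use False in blast)
      then show ?thesis using triv by blast
    next
      case True
      then obtain e2 where e2: "e2 \<in> E" "v1 \<in> e2" "g e2 = 2" by blast
      obtain v2 where v2: "e2 = {v1,v2}" "v2 \<noteq> v1" using edge_other[OF SG e2(1,2)] by blast
      have e2T: "e2 \<in> ?T" using e2 unfolding two_color_edges_def by simp
      have be2: "b \<noteq> e2" using b(3) e2(3) by auto
      have Rbe2: "?R b e2" using bT e2T be2 v1(1) e2(2) unfolding edges_adj_def by blast
      show ?thesis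
      proof (cases "\<exists>e3\<in>E. v2 \<in> e3 \<and> g e3 = 1")
        case False
        have "Ygood E h g ?xy y"
          by (rule Y2[where h=h, OF P shrink_refl[of E g] xyE yxy gxy b(1) v1(1) b(3) b(3) hb e2(1) v2(1) e2(3) e2(3)])
             (use False in blast)
        then show ?thesis using triv by blast
      next
        case True
        then obtain e3 where e3: "e3 \<in> E" "v2 \<in> e3" "g e3 = 1" by blast
        obtain v3 where v3: "e3 = {v2,v3}" "v3 \<noteq> v2" using edge_other[OF SG e3(1,2)] by blast
        have e3T: "e3 \<in> ?T" using e3 unfolding two_color_edges_def by simp
        have e2e3: "e2 \<noteq> e3" using e3(3) e2(3) by auto
        have Re2e3: "?R e2 e3" using e2T e3T e2e3 v2(1) e3(2) unfolding edges_adj_def by blast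
        have w3: "(?R ^^ 3) ?xy e3"
        proof -
          have w1: "(?R ^^ 1) ?xy b" unfolding relpowp_1 by (rule Rxyb)
          have w2: "(?R ^^ Suc 1) ?xy e2" by (rule relpowp_Suc_I[OF w1 Rbe2])
          have n3: "(3::nat) = Suc (Suc 1)" by simp
          show ?thesis unfolding n3 by (rule relpowp_Suc_I[OF w2 Re2e3])
        qed
        then have he3: "h e3 \<noteq> 1" using bad[OF e3(1) e3(3), of 3] unfolding walkT_def by simp
        show ?thesis
        proof (cases "\<exists>e4\<in>E. v3 \<in> e4 \<and> g e4 = 2")
          case False
          have "Ygood E h g ?xy y"
            by (rule Y3[where h=h, OF P shrink_refl[of E g] xyE yxy gxy b(1) v1(1) b(3) b(3) hb e2(1) v2(1) e2(3) e2(3)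
                  e3(1) v3(1) e3(3) e3(3) he3])
               (use False in blast)
          then show ?thesis using triv by blast
        next
          case True
          then obtain e4 where e4: "e4 \<in> E" "v3 \<in> e4" "g e4 = 2" by blast
          have d1: "y \<noteq> v2"
          proof
            assume "y = v2" then have "e2 = b" using v1(1) v2(1) by (simp add: insert_commute)
            then show False using be2 by simp
          qed
          have d2: "v1 \<noteq> v3"
          proof
            assume "v1 = v3" then have "e3 = e2" using v2(1) v3(1) by (simp add: insert_commute)
            then show False using e2e3 by simp
          qed
          have d3: "y \<noteq> v3"
          proof
            assume "y = v3"
            then have "y \<in> e3" using v3(1) by simp
            then have "e3 = b" using uniq[OF P e3(1) b(1) _ b(2)] e3(3) b(3) by simp
            then have "{v2,y} = {y,v1}" using v1(1) v3(1) `y = v3` by simp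
            then have "v2 = v1" using d1 by (auto simp: doubleton_eq_iff)
            then show False using v2(2) by simp
          qed
          obtain g'' where G: "Good E g g'' {b,e2,e3}"
              and D: "g'' b \<notin> {1,2} \<or> g'' e2 \<notin> {1,2} \<or> g'' e3 \<notin> {1,2}"
            using core[OF SG P deg b(1) v1(1) b(3) e2(1) v2(1) e2(3) e3(1) v3(1) e3(3) xyE yxy gxy e4
                v1(2)[symmetric] v2(2)[symmetric] v3(2)[symmetric] d1 d2 d3] by blast
          have P'': "proper_edge_coloring E 5 g''" using Good_proper[OF G P] .
          have sh: "shrink E g g''" using G unfolding Good_def by blast
          have reach: "(interchange E 5)\<^sup>*\<^sup>* g g''" using G unfolding Good_def by blast
          have xyn: "?xy \<notin> {b,e2,e3}"
          proof -
            have "?xy \<noteq> e2"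
            proof
              assume "?xy = e2" then have "v1 \<in> ?xy" using v2(1) by simp
              then show False using v1x v1(2) by simp
            qed
            moreover have "?xy \<noteq> e3" using gxy e3(3) by auto
            ultimately show ?thesis using xyb by simp
          qed
          have gxy'': "g'' ?xy = 2" using Good_keep[OF G xyE _ xyn] gxy by simp
          have rem: "\<forall>e\<in>E. g e = 1 \<longrightarrow> g'' e \<noteq> 1 \<longrightarrow> h e \<noteq> 1"
          proof (intro ballI impI)
            fix e assume e: "e \<in> E" "g e = 1" "g'' e \<noteq> 1"
            have "g e \<in> {1,2}" "g'' e \<noteq> g e" using e by simp_all
            then have "e \<in> {b,e2,e3}" using G e(1) unfolding Good_def by blast
            then show "h e \<noteq> 1" using hb he3 e(2) e2(3) by auto
          qed
          have sv: "\<And>e. e \<in> E \<Longrightarrow> g'' e \<in> {1,2} \<Longrightarrow> g'' e = g e" using sh unfolding shrink_def by blast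
          have Y: "Ygood E h g'' ?xy y"
          proof (cases "g'' b \<in> {1,2}")
            case False
            show ?thesis
            proof (rule Y0[where h=h, OF P sh xyE yxy gxy])
              show "\<forall>e\<in>E. y \<in> e \<longrightarrow> g e = 1 \<longrightarrow> g'' e \<noteq> 1"
              proof (intro ballI impI)
                fix e assume "e \<in> E" "y \<in> e" "g e = 1"
                then have "e = b" using uniq[OF P _ b(1) _ b(2)] b(3) by simp
                then show "g'' e \<noteq> 1" using False by simp
              qed
            qed
          next
            case gb: True
            then have gb1: "g'' b = 1" using sv[OF b(1)] b(3) by simp
            show ?thesis
            proof (cases "g'' e2 \<in> {1,2}")
              case False
              show ?thesis
              proof (rule Y1[where h=h, OF P sh xyE yxy gxy b(1) v1(1) b(3) gb1 hb])
                show "\<forall>e\<in>E. v1 \<in> e \<longrightarrow> g e = 2 \<longrightarrow> g'' e \<noteq> 2"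
                proof (intro ballI impI)
                  fix e assume "e \<in> E" "v1 \<in> e" "g e = 2"
                  then have "e = e2" using uniq[OF P _ e2(1) _ e2(2)] e2(3) by simp
                  then show "g'' e \<noteq> 2" using False by simp
                qed
              qed
            next
              case g2: True
              then have g22: "g'' e2 = 2" using sv[OF e2(1)] e2(3) by simp
              have g3: "g'' e3 \<notin> {1,2}" using D gb g2 by blast
              show ?thesis
              proof (rule Y2[where h=h, OF P sh xyE yxy gxy b(1) v1(1) b(3) gb1 hb e2(1) v2(1) e2(3) g22])
                show "\<forall>e\<in>E. v2 \<in> e \<longrightarrow> g e = 1 \<longrightarrow> g'' e \<noteq> 1"
                proof (intro ballI impI)
                  fix e assume "e \<in> E" "v2 \<in> e" "g e = 1"
                  then have "e = e3" using uniq[OF P _ e3(1) _ e3(2)] e3(3) by simp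
                  then show "g'' e \<noteq> 1" using g3 by simp
                qed
              qed
            qed
          qed
          show ?thesis using reach sh gxy'' rem Y by blast
        qed
      qed
    qed
  qed
qed




lemma final:
  assumes SG: "simple_graph V E" and P: "proper_edge_coloring E 5 g"
    and xyE: "{x,y} \<in> E" and gxy: "g {x,y} = 2" and hxy: "h {x,y} = 1"
    and Yy: "Ygood E h g {x,y} y" and Yx: "Ygood E h g {x,y} x"
  shows "interchange E 5 g (swap_on (component E g 1 2 {x,y}) 1 2 g) \<and>
    card (color_class E (swap_on (component E g 1 2 {x,y}) 1 2 g) 1 \<inter> color_class E h 1)
      > card (color_class E g 1 \<inter> color_class E h 1)"
proof -
  let ?xy = "{x,y}"
  let ?K = "component E g 1 2 ?xy"
  let ?T = "two_color_edges E g 1 2"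
  let ?g' = "swap_on ?K 1 2 g"
  obtain Ay where YAy: "Yset E h g ?xy y Ay" using Yy unfolding Ygood_def by blast
  note A0 = YAy[unfolded Yset_def]
  note Ay = conjunct1[OF A0] conjunct1[OF conjunct2[OF A0]] conjunct1[OF conjunct2[OF conjunct2[OF A0]]]
     conjunct2[OF conjunct2[OF conjunct2[OF A0]]]
  obtain Ax where YAx: "Yset E h g ?xy x Ax" using Yx unfolding Ygood_def by blast
  note B0 = YAx[unfolded Yset_def]
  note Ax = conjunct1[OF B0] conjunct1[OF conjunct2[OF B0]] conjunct1[OF conjunct2[OF conjunct2[OF B0]]]
     conjunct2[OF conjunct2[OF conjunct2[OF B0]]]
  let ?C = "insert ?xy (Ay \<union> Ax)"
  have xyT: "?xy \<in> ?T" using xyE gxy unfolding two_color_edges_def by simp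
  have KC: "?K \<subseteq> ?C"
  proof (rule comp_subset)
    show "?xy \<in> ?C" by simp
  next
    fix e e' assume e: "e \<in> ?C" and e': "e' \<in> ?T" and adj: "edges_adj e e'"
    obtain z where z: "z \<in> e" "z \<in> e'" using adj unfolding edges_adj_def by blast
    have e'E: "e' \<in> E" "g e' \<in> {1,2}" using e' unfolding two_color_edges_def by auto
    consider "e = ?xy" | "e \<in> Ay" | "e \<in> Ax" using e by blast
    then show "e' \<in> ?C"
    proof cases
      case 1
      then have "z = x \<or> z = y" using z by simp
      then show ?thesis
      proof
        assume "z = x" then have "e' \<in> Ax \<or> e' = ?xy" using Ax(4) e'E z(2) by blast
        then show ?thesis by blast
      next
        assume "z = y" then have "e' \<in> Ay \<or> e' = ?xy" using Ay(4) e'E z(2) by blast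
        then show ?thesis by blast
      qed
    next
      case 2
      then have "e' \<in> Ay \<or> e' = ?xy" using Ay(3) e'E z by blast
      then show ?thesis by blast
    next
      case 3
      then have "e' \<in> Ax \<or> e' = ?xy" using Ax(3) e'E z by blast
      then show ?thesis by blast
    qed
  qed
  have Kbad: "\<And>e. e \<in> ?K \<Longrightarrow> g e = 1 \<Longrightarrow> h e \<noteq> 1"
  proof -
    fix e assume eK: "e \<in> ?K" and ge: "g e = 1"
    then have "e \<in> ?C" using KC by blast
    moreover have "e \<noteq> ?xy" using ge gxy by auto
    ultimately have "e \<in> Ay \<or> e \<in> Ax" by blast
    then show "h e \<noteq> 1" using Ay(2) Ax(2) ge by blast
  qed
  have inter: "interchange E 5 g ?g'"
    unfolding interchange_def using xyT by (intro exI[of _ 1] exI[of _ 2] exI[of _ ?xy]) auto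
  let ?S1 = "color_class E g 1 \<inter> color_class E h 1"
  let ?S2 = "color_class E ?g' 1 \<inter> color_class E h 1"
  have sub: "?S1 \<subseteq> ?S2"
  proof
    fix e assume "e \<in> ?S1"
    then have e: "e \<in> E" "g e = 1" "h e = 1" unfolding color_class_def by auto
    then have "e \<notin> ?K" using Kbad by blast
    then have "?g' e = 1" using e(2) unfolding swap_on_def by simp
    then show "e \<in> ?S2" using e unfolding color_class_def by simp
  qed
  have xyK: "?xy \<in> ?K" using comp_self[OF xyT] .
  have "?g' ?xy = 1" using xyK gxy unfolding swap_on_def by simp
  then have xyS2: "?xy \<in> ?S2" using xyE hxy unfolding color_class_def by simp
  have xyS1: "?xy \<notin> ?S1" using gxy unfolding color_class_def by simp
  have fin: "finite E" using SG_finite[OF SG] .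
  have finS2: "finite ?S2" using fin unfolding color_class_def by simp
  have "?S1 \<subset> ?S2" using sub xyS2 xyS1 by blast
  then have "card ?S1 < card ?S2" using finS2 by (rule psubset_card_mono[rotated])
  then show ?thesis using inter by simp
qed

lemma deg4:
  assumes SG: "simple_graph V E" and md: "max_degree V E = 4"
  shows "card {e\<in>E. z \<in> e} \<le> 4"
proof (cases "z \<in> V")
  case True
  have finV: "finite V" using SG unfolding simple_graph_def by simp
  have "degree E z \<in> insert 0 (degree E ` V)" using True by simp
  then have "degree E z \<le> Max (insert 0 (degree E ` V))" using finV by simp
  then show ?thesis using md unfolding max_degree_def degree_def by simp
next
  case False
  have "{e\<in>E. z \<in> e} = {}"
  proof -
    { fix e assume e: "e \<in> E" "z \<in> e"
      then obtain u v where "e = {u,v}" "u \<in> V" "v \<in> V" using SG unfolding simple_graph_def by blast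
      then have False using e(2) False by blast }
    then show ?thesis by blast
  qed
  then show ?thesis by (simp only: card.empty)
qed




lemma walk_P:
  assumes sh: "shrink E f g" and xyT: "xy \<in> two_color_edges E f 1 2"
  shows "walkT E g xy n e \<Longrightarrow> walk_steps_in (component E f 1 2 xy) n xy e \<and> e \<in> component E f 1 2 xy"
proof (induction n arbitrary: e)
  case 0
  then have "e = xy" unfolding walkT_def by simp
  then show ?case using comp_self[OF xyT] unfolding walk_steps_in_def by simp
next
  case (Suc n)
  let ?Rg = "\<lambda>u v. u \<in> two_color_edges E g 1 2 \<and> v \<in> two_color_edges E g 1 2 \<and> edges_adj u v"
  from Suc.prems obtain d where d: "(?Rg ^^ n) xy d" "?Rg d e" unfolding walkT_def by (auto elim: relpowp_Suc_E)
  have IH: "walk_steps_in (component E f 1 2 xy) n xy d" "d \<in> component E f 1 2 xy"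
    using Suc.IH[of d] d(1) unfolding walkT_def by auto
  have eTg: "e \<in> two_color_edges E g 1 2" using d(2) by blast
  then have "e \<in> E" "g e \<in> {1,2}" unfolding two_color_edges_def by auto
  then have "f e = g e" using sh unfolding shrink_def by auto
  then have eTf: "e \<in> two_color_edges E f 1 2" using eTg unfolding two_color_edges_def by auto
  have adj: "edges_adj d e" using d(2) by blast
  have eP: "e \<in> component E f 1 2 xy" by (rule comp_closed[OF IH(2) eTf adj])
  have "walk_steps_in (component E f 1 2 xy) (Suc n) xy e"
    using IH(1) IH(2) eP adj unfolding walk_steps_in_def by (auto intro: relpowp_Suc_I)
  then show ?case using eP by simp
qed

theorem lemma2p3:
  fixes V :: "'a set" and E :: "'a set set" and h f :: "'a set \<Rightarrow> nat"
    and x y :: 'a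
  assumes "simple_graph V E"
    and "chromatic_index E = 4" and "max_degree V E = 4"
    and "proper_edge_coloring E 4 h"
    and "proper_edge_coloring E 5 f"
    and "{x, y} \<in> E" and "f {x, y} = 2" and "h {x, y} = 1"
    and "\<not> (\<exists>e. dist_le_on (component E f 1 2 {x, y}) {x, y} e 2 \<and> f e = 1 \<and> h e = 1)"
  shows "\<exists>f'. proper_edge_coloring E 5 f' \<and> (interchange E 5)\<^sup>*\<^sup>* f f' \<and>
           card (color_class E f' 1 \<inter> color_class E h 1) > card (color_class E f 1 \<inter> color_class E h 1)"
proof -
  note SG = assms(1) and Pf = assms(5) and xyE = assms(6) and fxy = assms(7) and hxy = assms(8)
  note H9 = assms(9)
  let ?xy = "{x,y}"
  have deg: "\<And>z. card {e\<in>E. z \<in> e} \<le> 4" using deg4[OF SG assms(3)] .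
  have xyTf: "?xy \<in> two_color_edges E f 1 2" using xyE fxy unfolding two_color_edges_def by simp
  have badg: "h e \<noteq> 1" if sh: "shrink E f g" and e: "e \<in> E" "g e = 1" "n \<le> 3" "walkT E g ?xy n e" for g e n
  proof -
    have W: "walk_steps_in (component E f 1 2 ?xy) n ?xy e" "e \<in> component E f 1 2 ?xy"
      using walk_P[OF sh xyTf e(4)] by auto
    have "?xy \<in> component E f 1 2 ?xy" by (rule comp_self[OF xyTf])
    then have "dist_le_on (component E f 1 2 ?xy) ?xy e 2"
      unfolding dist_le_on_def using W e(3) by (intro conjI exI[of _ n]) auto
    moreover have "f e = 1" using sh e(1,2) unfolding shrink_def by auto
    ultimately show "h e \<noteq> 1" using H9 by blast
  qed
  have bad0: "h e \<noteq> 1" if "e \<in> E" "f e = 1" "n \<le> 3" "walkT E f ?xy n e" for e n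
    using badg[OF shrink_refl[of E f]] that by blast
  have "\<exists>g'. (interchange E 5)\<^sup>*\<^sup>* f g' \<and> shrink E f g' \<and> g' ?xy = 2 \<and>
           (\<forall>e\<in>E. f e = 1 \<longrightarrow> g' e \<noteq> 1 \<longrightarrow> h e \<noteq> 1) \<and> Ygood E h g' ?xy y"
    apply (rule side[OF SG Pf deg xyE fxy])
    apply (rule bad0)
       apply assumption+
    done
  then obtain g1 where g1: "(interchange E 5)\<^sup>*\<^sup>* f g1" "shrink E f g1" "g1 ?xy = 2"
      "\<forall>e\<in>E. f e = 1 \<longrightarrow> g1 e \<noteq> 1 \<longrightarrow> h e \<noteq> 1" "Ygood E h g1 ?xy y"
    by blast
  have P1: "proper_edge_coloring E 5 g1" using reach_proper[OF g1(1) Pf] .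
  have yx: "{y,x} = ?xy" by (simp add: insert_commute)
  have xyE': "{y,x} \<in> E" using xyE yx by simp
  have g1yx: "g1 {y,x} = 2" using g1(3) yx by simp
  have bad1: "h e \<noteq> 1" if "e \<in> E" "g1 e = 1" "n \<le> 3" "walkT E g1 {y,x} n e" for e n
    using badg[OF g1(2)] that yx by simp
  have "\<exists>g'. (interchange E 5)\<^sup>*\<^sup>* g1 g' \<and> shrink E g1 g' \<and> g' {y,x} = 2 \<and>
           (\<forall>e\<in>E. g1 e = 1 \<longrightarrow> g' e \<noteq> 1 \<longrightarrow> h e \<noteq> 1) \<and> Ygood E h g' {y,x} x"
    apply (rule side[OF SG P1 deg xyE' g1yx])
    apply (rule bad1)
       apply assumption+
    done
  then obtain g2 where g2: "(interchange E 5)\<^sup>*\<^sup>* g1 g2" "shrink E g1 g2" "g2 {y,x} = 2"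
      "\<forall>e\<in>E. g1 e = 1 \<longrightarrow> g2 e \<noteq> 1 \<longrightarrow> h e \<noteq> 1" "Ygood E h g2 {y,x} x"
    by blast
  have P2: "proper_edge_coloring E 5 g2" using reach_proper[OF g2(1) P1] .
  have g2xy: "g2 ?xy = 2" using g2(3) yx by simp
  have Yx: "Ygood E h g2 ?xy x" using g2(5) yx by simp
  have Yy: "Ygood E h g2 ?xy y" by (rule Ygood_mono[OF g1(5) g2(2)])
  have sh2: "shrink E f g2" by (rule shrink_trans[OF g1(2) g2(2)])
  define g3 where "g3 = swap_on (component E g2 1 2 ?xy) 1 2 g2"
  have fin: "interchange E 5 g2 g3 \<and>
      card (color_class E g3 1 \<inter> color_class E h 1) > card (color_class E g2 1 \<inter> color_class E h 1)"
    unfolding g3_def by (rule final[OF SG P2 xyE g2xy hxy Yy Yx])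
  have P3: "proper_edge_coloring E 5 g3" using interchange_proper fin P2 by blast
  have reach: "(interchange E 5)\<^sup>*\<^sup>* f g3"
    using rtranclp_trans[OF g1(1) g2(1)] fin by (meson rtranclp.rtrancl_into_rtrancl)
  have eqS: "color_class E g2 1 \<inter> color_class E h 1 = color_class E f 1 \<inter> color_class E h 1"
  proof
    show "color_class E g2 1 \<inter> color_class E h 1 \<subseteq> color_class E f 1 \<inter> color_class E h 1"
    proof
      fix e assume "e \<in> color_class E g2 1 \<inter> color_class E h 1"
      then have e: "e \<in> E" "g2 e = 1" "h e = 1" unfolding color_class_def by auto
      then have "f e = 1" using sh2 unfolding shrink_def by auto
      then show "e \<in> color_class E f 1 \<inter> color_class E h 1" using e unfolding color_class_def by simp
    qed
  next
    show "color_class E f 1 \<inter> color_class E h 1 \<subseteq> color_class E g2 1 \<inter> color_class E h 1"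
    proof
      fix e assume "e \<in> color_class E f 1 \<inter> color_class E h 1"
      then have e: "e \<in> E" "f e = 1" "h e = 1" unfolding color_class_def by auto
      then have "g1 e = 1" using g1(4) by blast
      then have "g2 e = 1" using g2(4) e by blast
      then show "e \<in> color_class E g2 1 \<inter> color_class E h 1" using e unfolding color_class_def by simp
    qed
  qed
  show ?thesis using P3 reach fin eqS by (intro exI[of _ g3]) simp
qed


end
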